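(* Let $M\subset\mathbf{R}^{n+1}$ be a smooth closed connected mean convex hypersurface and let $u$ be the arrival time of the mean curvature flow starting from $M$. Suppose that $\nabla u(0)=0$ and $\mathrm{Hess}_u(0)$ has kernel $K$, and let $\Pi$ denote orthogonal projection onto $K^{\perp}$. Then there exist $\epsilon>0$ and $C$ such that for every $p\in B_{\epsilon}\cap K$ there exists $$q\in B_{C|p|}\cap\left(p+K^{\perp}\right)\quad\text{with}\quad \Pi(\nabla u(q))=0,$$ where $B_r$ denotes the ball of radius $r$ centered at $0$.
   Context: Mean convex means the mean curvature is non-negative. The arrival time $u$ is defined on the compact domain bounded by $M$: $u(x)$ is the time at which the front passes through $x$; equivalently $u$ is the Lipschitz viscosity solution of $-1=|\nabla u|\,\mathrm{div}(\nabla u/|\nabla u|)$ with $u=0$ on $M$. It is known that $u$ is twice differentiable everywhere, so $\mathrm{Hess}_u(0)$ is defined. No $C^2$ assumption on $u$ is made here. *)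

theory Defs
  imports "HOL-Analysis.Analysis"
begin

definition grad :: "('a::euclidean_space \<Rightarrow> real) \<Rightarrow> 'a \<Rightarrow> 'a" where
  "grad u x = (\<Sum>b\<in>Basis. frechet_derivative u (at x) b *\<^sub>R b)"

definition hess :: "('a::euclidean_space \<Rightarrow> real) \<Rightarrow> 'a \<Rightarrow> 'a \<Rightarrow> 'a" where
  "hess u x = frechet_derivative (grad u) (at x)"

definition twice_differentiable_at :: "('a::euclidean_space \<Rightarrow> real) \<Rightarrow> 'a \<Rightarrow> bool" where
  "twice_differentiable_at u x \<longleftrightarrow>
     (\<forall>\<^sub>F y in nhds x. u differentiable at y) \<and> grad u differentiable at x"

definition orth_proj :: "'a::euclidean_space set \<Rightarrow> 'a \<Rightarrow> 'a" where
  "orth_proj S x = (THE y. y \<in> S \<and> x - y \<in> orthogonal_comp S)"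

end

theory Submission imports Defs
begin


lemma grad_deriv:
  fixes u :: "'a::euclidean_space \<Rightarrow> real"
  assumes "u differentiable at x"
  shows "(u has_derivative (\<lambda>v. grad u x \<bullet> v)) (at x)"
proof -
  define D where "D = frechet_derivative u (at x)"
  have uD: "(u has_derivative D) (at x)" using assms frechet_derivative_works D_def by blast
  have lin: "linear D" using has_derivative_linear[OF uD] .
  have "D v = grad u x \<bullet> v" for v
  proof -
    have "D v = D (\<Sum>b\<in>Basis. (v \<bullet> b) *\<^sub>R b)" by (simp add: euclidean_representation)
    also have "\<dots> = (\<Sum>b\<in>Basis. (v \<bullet> b) * D b)"
      by (simp add: linear_sum[OF lin] linear_scale[OF lin])
    also have "\<dots> = grad u x \<bullet> v"
      by (simp add: grad_def D_def inner_sum_right inner_commute mult.commute)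
    finally show ?thesis .
  qed
  then have "D = (\<lambda>v. grad u x \<bullet> v)" by auto
  with uD show ?thesis by simp
qed

lemma line_deriv:
  fixes u :: "'a::euclidean_space \<Rightarrow> real"
  assumes "(u has_derivative (\<lambda>v. G \<bullet> v)) (at (a + s *\<^sub>R h))"
  shows "((\<lambda>s. u (a + s *\<^sub>R h)) has_real_derivative (G \<bullet> h)) (at s)"
proof -
  have l: "((\<lambda>s. a + s *\<^sub>R h) has_derivative (\<lambda>s. s *\<^sub>R h)) (at s)"
    by (auto intro!: derivative_eq_intros)
  have "((u \<circ> (\<lambda>s. a + s *\<^sub>R h)) has_derivative ((\<lambda>v. G \<bullet> v) \<circ> (\<lambda>s. s *\<^sub>R h))) (at s)"
    by (rule diff_chain_at[OF l assms])
  moreover have "((\<lambda>v. G \<bullet> v) \<circ> (\<lambda>s. s *\<^sub>R h)) = (*) (G \<bullet> h)"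
    by (auto simp: fun_eq_iff mult.commute)
  ultimately show ?thesis by (simp add: has_field_derivative_def o_def)
qed


lemma delta_est:
  fixes u :: "'a::euclidean_space \<Rightarrow> real" and g H :: "'a \<Rightarrow> 'a"
  assumes gH: "(g has_derivative H) (at 0)" and g0: "g 0 = 0" and d0: "\<delta>0 > 0"
    and du: "\<forall>y. norm y < \<delta>0 \<longrightarrow> (u has_derivative (\<lambda>v. g y \<bullet> v)) (at y)"
    and e: "\<eta> > 0"
  shows "\<exists>\<delta>>0. \<forall>t. 0 < t \<and> t < \<delta> \<longrightarrow>
    \<bar>u (t *\<^sub>R k + t *\<^sub>R h) - u (t *\<^sub>R h) - u (t *\<^sub>R k) + u 0 - t\<^sup>2 * (H k \<bullet> h)\<bar>
      \<le> t\<^sup>2 * \<eta> * (2 * norm h + norm k) * norm h"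
proof -
  have lin: "linear H" using has_derivative_linear[OF gH] .
  obtain d where d: "d > 0" "\<forall>y. norm y < d \<longrightarrow> norm (g y - H y) \<le> \<eta> * norm y"
    using gH e unfolding has_derivative_at_alt by (fastforce simp: g0)
  define \<delta> where "\<delta> = min d \<delta>0 / (norm h + norm k + 1)"
  have \<delta>pos: "\<delta> > 0" using d d0 unfolding \<delta>_def by (intro divide_pos_pos) (auto intro: add_nonneg_pos)
  show ?thesis
  proof (intro exI[of _ \<delta>] conjI allI impI \<delta>pos)
    fix t :: real assume t: "0 < t \<and> t < \<delta>"
    have small: "norm (a *\<^sub>R k + s *\<^sub>R h) < min d \<delta>0" if "0 \<le> a" "a \<le> t" "0 \<le> s" "s \<le> t" for a s
    proof -
      have "norm (a *\<^sub>R k + s *\<^sub>R h) \<le> a * norm k + s * norm h"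
        using that by (metis abs_of_nonneg norm_scaleR norm_triangle_ineq)
      also have "\<dots> \<le> t * (norm h + norm k)"
        using that mult_right_mono[of a t "norm k"] mult_right_mono[of s t "norm h"] by (simp add: distrib_left)
      also have "\<dots> < min d \<delta>0"
      proof -
        have "t * (norm h + norm k + 1) < \<delta> * (norm h + norm k + 1)"
          using t by (intro mult_strict_right_mono) (auto intro: add_nonneg_pos)
        also have "\<dots> = min d \<delta>0" unfolding \<delta>_def
        proof -
          have "norm h + norm k + 1 > 0" by (auto intro: add_nonneg_pos)
          then show "min d \<delta>0 / (norm h + norm k + 1) * (norm h + norm k + 1) = min d \<delta>0" by simp
        qed
        finally show ?thesis using t by (smt (verit) mult_pos_pos norm_ge_zero distrib_left)
      qed
      finally show ?thesis .
    qed
    define \<phi> where "\<phi> s = u (t *\<^sub>R k + s *\<^sub>R h) - u (0 + s *\<^sub>R h)" for s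
    define \<phi>' where "\<phi>' s = g (t *\<^sub>R k + s *\<^sub>R h) \<bullet> h - g (0 + s *\<^sub>R h) \<bullet> h" for s
    have der: "DERIV \<phi> s :> \<phi>' s" if "0 \<le> s" "s \<le> t" for s
    proof -
      have n1: "norm (t *\<^sub>R k + s *\<^sub>R h) < \<delta>0" using small[of t s] that t by auto
      have n2: "norm (0 + s *\<^sub>R h) < \<delta>0" using small[of 0 s] that t by auto
      show ?thesis unfolding \<phi>_def \<phi>'_def
        by (intro DERIV_diff line_deriv) (use du n1 n2 in auto)
    qed
    obtain \<xi> where \<xi>: "0 < \<xi>" "\<xi> < t" "\<phi> t - \<phi> 0 = (t - 0) * \<phi>' \<xi>"
      using MVT2[of 0 t \<phi> \<phi>'] der t by auto
    define y1 where "y1 = t *\<^sub>R k + \<xi> *\<^sub>R h"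
    define y2 where "y2 = \<xi> *\<^sub>R h"
    have ny1: "norm y1 < d" using small[of t \<xi>] \<xi> unfolding y1_def by auto
    have ny2: "norm y2 < d" using small[of 0 \<xi>] \<xi> unfolding y2_def by auto
    have ny1': "norm y1 \<le> t * norm k + t * norm h"
    proof -
      have "norm y1 \<le> t * norm k + \<xi> * norm h" unfolding y1_def
        using t \<xi> by (metis abs_of_nonneg less_imp_le norm_scaleR norm_triangle_ineq)
      also have "\<dots> \<le> t * norm k + t * norm h" using \<xi> by (simp add: mult_right_mono)
      finally show ?thesis .
    qed
    have ny2': "norm y2 \<le> t * norm h" unfolding y2_def using \<xi> by (simp add: mult_right_mono)
    have Hy: "H y1 - H y2 = t *\<^sub>R H k"
      unfolding y1_def y2_def by (simp add: linear_add[OF lin] linear_scale[OF lin])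
    have eq: "u (t *\<^sub>R k + t *\<^sub>R h) - u (t *\<^sub>R h) - u (t *\<^sub>R k) + u 0 - t\<^sup>2 * (H k \<bullet> h)
        = t * (((g y1 - H y1) - (g y2 - H y2)) \<bullet> h)"
    proof -
      have "u (t *\<^sub>R k + t *\<^sub>R h) - u (t *\<^sub>R h) - u (t *\<^sub>R k) + u 0 = \<phi> t - \<phi> 0"
        by (simp add: \<phi>_def)
      also have "\<dots> = t * (g y1 \<bullet> h - g y2 \<bullet> h)" using \<xi>(3) by (simp add: \<phi>'_def y1_def y2_def)
      finally have a: "u (t *\<^sub>R k + t *\<^sub>R h) - u (t *\<^sub>R h) - u (t *\<^sub>R k) + u 0 = t * (g y1 \<bullet> h - g y2 \<bullet> h)" .
      have b: "((g y1 - H y1) - (g y2 - H y2)) \<bullet> h = g y1 \<bullet> h - g y2 \<bullet> h - t * (H k \<bullet> h)"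
      proof -
        have "((g y1 - H y1) - (g y2 - H y2)) = (g y1 - g y2) - (H y1 - H y2)" by (simp add: algebra_simps)
        moreover have "(H y1 - H y2) \<bullet> h = t * (H k \<bullet> h)" using Hy by simp
        ultimately show ?thesis by (simp only: inner_diff_left)
      qed
      show ?thesis unfolding b a by (simp add: power2_eq_square algebra_simps)
    qed
    have "\<bar>((g y1 - H y1) - (g y2 - H y2)) \<bullet> h\<bar> \<le> norm ((g y1 - H y1) - (g y2 - H y2)) * norm h"
      by (rule Cauchy_Schwarz_ineq2)
    also have "\<dots> \<le> (\<eta> * norm y1 + \<eta> * norm y2) * norm h"
      using d(2) ny1 ny2 by (intro mult_right_mono) (auto intro: order_trans[OF norm_triangle_ineq4] add_mono)
    also have "\<dots> \<le> (\<eta> * (t * norm k + t * norm h) + \<eta> * (t * norm h)) * norm h"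
      using ny1' ny2' e by (intro mult_right_mono add_mono mult_left_mono) auto
    also have "\<dots> = t * (\<eta> * (2 * norm h + norm k) * norm h)" by (simp add: algebra_simps)
    finally have "\<bar>((g y1 - H y1) - (g y2 - H y2)) \<bullet> h\<bar> \<le> t * (\<eta> * (2 * norm h + norm k) * norm h)" .
    then have "\<bar>t * (((g y1 - H y1) - (g y2 - H y2)) \<bullet> h)\<bar> \<le> t * (t * (\<eta> * (2 * norm h + norm k) * norm h))"
      using t by (simp add: abs_mult)
    then show "\<bar>u (t *\<^sub>R k + t *\<^sub>R h) - u (t *\<^sub>R h) - u (t *\<^sub>R k) + u 0 - t\<^sup>2 * (H k \<bullet> h)\<bar>
      \<le> t\<^sup>2 * \<eta> * (2 * norm h + norm k) * norm h"
      unfolding eq by (simp add: power2_eq_square algebra_simps)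
  qed
qed


lemma small_zero:
  fixes x M :: real
  assumes M: "M \<ge> 0" and h: "\<And>\<eta>. \<eta> > 0 \<Longrightarrow> \<bar>x\<bar> \<le> \<eta> * M"
  shows "x = 0"
proof (rule ccontr)
  assume "x \<noteq> 0"
  then have xp: "\<bar>x\<bar> > 0" by simp
  have "\<bar>x\<bar> \<le> (\<bar>x\<bar> / (M + 1)) * M" using h[of "\<bar>x\<bar> / (M + 1)"] xp M by simp
  also have "\<dots> < \<bar>x\<bar>" using xp M by (simp add: field_simps)
  finally show False by simp
qed

lemma hess_sym:
  fixes u :: "'a::euclidean_space \<Rightarrow> real" and g H :: "'a \<Rightarrow> 'a"
  assumes gH: "(g has_derivative H) (at 0)" and g0: "g 0 = 0" and d0: "\<delta>0 > 0"
    and du: "\<forall>y. norm y < \<delta>0 \<longrightarrow> (u has_derivative (\<lambda>v. g y \<bullet> v)) (at y)"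
  shows "H k \<bullet> h = H h \<bullet> k"
proof -
  define M where "M = (2 * norm h + norm k) * norm h + (2 * norm k + norm h) * norm k"
  have M: "M \<ge> 0" unfolding M_def by simp
  have "H k \<bullet> h - H h \<bullet> k = 0"
  proof (rule small_zero[OF M])
    fix \<eta> :: real assume e: "\<eta> > 0"
    obtain \<delta>1 where d1: "\<delta>1 > 0" "\<forall>t. 0 < t \<and> t < \<delta>1 \<longrightarrow>
      \<bar>u (t *\<^sub>R k + t *\<^sub>R h) - u (t *\<^sub>R h) - u (t *\<^sub>R k) + u 0 - t\<^sup>2 * (H k \<bullet> h)\<bar>
        \<le> t\<^sup>2 * \<eta> * (2 * norm h + norm k) * norm h"
      using delta_est[OF gH g0 d0 du e, of k h] by blast
    obtain \<delta>2 where d2: "\<delta>2 > 0" "\<forall>t. 0 < t \<and> t < \<delta>2 \<longrightarrow>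
      \<bar>u (t *\<^sub>R h + t *\<^sub>R k) - u (t *\<^sub>R k) - u (t *\<^sub>R h) + u 0 - t\<^sup>2 * (H h \<bullet> k)\<bar>
        \<le> t\<^sup>2 * \<eta> * (2 * norm k + norm h) * norm k"
      using delta_est[OF gH g0 d0 du e, of h k] by blast
    define t where "t = min \<delta>1 \<delta>2 / 2"
    have t: "0 < t" "t < \<delta>1" "t < \<delta>2" using d1 d2 by (auto simp: t_def)
    define D where "D = u (t *\<^sub>R k + t *\<^sub>R h) - u (t *\<^sub>R h) - u (t *\<^sub>R k) + u 0"
    have D2: "D = u (t *\<^sub>R h + t *\<^sub>R k) - u (t *\<^sub>R k) - u (t *\<^sub>R h) + u 0"
      unfolding D_def by (simp add: add.commute)
    have a: "\<bar>D - t\<^sup>2 * (H k \<bullet> h)\<bar> \<le> t\<^sup>2 * \<eta> * (2 * norm h + norm k) * norm h"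
      using d1(2) t unfolding D_def by blast
    have b: "\<bar>D - t\<^sup>2 * (H h \<bullet> k)\<bar> \<le> t\<^sup>2 * \<eta> * (2 * norm k + norm h) * norm k"
      using d2(2) t unfolding D2 by blast
    have "t\<^sup>2 * \<bar>H k \<bullet> h - H h \<bullet> k\<bar> = \<bar>(D - t\<^sup>2 * (H h \<bullet> k)) - (D - t\<^sup>2 * (H k \<bullet> h))\<bar>"
    proof -
      have "(D - t\<^sup>2 * (H h \<bullet> k)) - (D - t\<^sup>2 * (H k \<bullet> h)) = t\<^sup>2 * (H k \<bullet> h - H h \<bullet> k)"
        by (simp add: algebra_simps)
      then show ?thesis by (simp add: abs_mult)
    qed
    also have "\<dots> \<le> t\<^sup>2 * (\<eta> * M)" using a b unfolding M_def by (simp add: algebra_simps)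
    finally show "\<bar>H k \<bullet> h - H h \<bullet> k\<bar> \<le> \<eta> * M" using t by simp
  qed
  then show ?thesis by simp
qed


lemma contr_est:
  fixes H :: "'a::euclidean_space \<Rightarrow> 'a" and w :: 'a
  assumes B: "B > 0" and c: "c > 0" "c \<le> B"
    and bd: "\<And>x. norm (H x) \<le> B * norm x" and lb: "c * norm w \<le> norm (H w)"
    and sy: "H (H w) \<bullet> w = H w \<bullet> H w"
  shows "norm (w - (c\<^sup>2 / B ^ 4) *\<^sub>R H (H w)) \<le> (1 - (c ^ 4 / B ^ 4) / 2) * norm w"
proof -
  define t where "t = c\<^sup>2 / B ^ 4"
  define a where "a = c ^ 4 / B ^ 4"
  have tpos: "t > 0" using B c by (simp add: t_def)
  have a1: "a \<le> 1"
  proof -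
    have "c ^ 4 \<le> B ^ 4" using c by (intro power_mono) auto
    moreover have "B ^ 4 > 0" using B by simp
    ultimately show ?thesis unfolding a_def by (simp only: divide_le_eq_1_pos)
  qed
  have a0: "a > 0" using B c by (simp add: a_def)
  have a1: "a \<le> 1"
  proof -
    have "c ^ 4 \<le> B ^ 4" using c by (intro power_mono) auto
    moreover have "B ^ 4 > 0" using B by simp
    ultimately show ?thesis unfolding a_def by (simp only: divide_le_eq_1_pos)
  qed
  have ec: "c ^ 4 = c\<^sup>2 * c\<^sup>2" by (simp flip: power_add)
  have eB: "B ^ 4 = B\<^sup>2 * B\<^sup>2" by (simp flip: power_add)
  have tc: "t * c\<^sup>2 = a" unfolding t_def a_def ec by simp
  have tB: "t\<^sup>2 * B ^ 4 = a"
  proof -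
    have "t\<^sup>2 = c ^ 4 / (B ^ 4 * B ^ 4)" unfolding t_def ec by (simp add: power_divide power2_eq_square)
    moreover have gen: "\<And>Y::real. Y \<noteq> 0 \<Longrightarrow> z / (Y * Y) * Y = z / Y" for z by simp
    moreover have "B ^ 4 \<noteq> 0" using B by simp
    ultimately show ?thesis unfolding a_def by (simp only: gen)
  qed
  define X where "X = (norm w)\<^sup>2"
  have P: "(norm (H w))\<^sup>2 \<ge> c\<^sup>2 * X"
  proof -
    have "(c * norm w)\<^sup>2 \<le> (norm (H w))\<^sup>2" using lb c by (intro power_mono) auto
    then show ?thesis by (simp add: X_def power_mult_distrib)
  qed
  have Q: "(norm (H (H w)))\<^sup>2 \<le> B ^ 4 * X"
  proof -
    have "norm (H (H w)) \<le> B * (B * norm w)"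
      using bd[of "H w"] bd[of w] B by (meson mult_left_mono order_trans less_imp_le)
    then have "(norm (H (H w)))\<^sup>2 \<le> (B * (B * norm w))\<^sup>2" by (intro power_mono) auto
    moreover have "(B * (B * norm w))\<^sup>2 = B ^ 4 * X" unfolding X_def eB by (simp only: power_mult_distrib mult.assoc)
    ultimately show ?thesis by simp
  qed
  have "(norm (w - t *\<^sub>R H (H w)))\<^sup>2 = X - 2 * t * (H (H w) \<bullet> w) + t\<^sup>2 * (norm (H (H w)))\<^sup>2"
  proof -
    have "(norm (w - t *\<^sub>R H (H w)))\<^sup>2 = (w - t *\<^sub>R H (H w)) \<bullet> (w - t *\<^sub>R H (H w))"
      by (simp add: power2_norm_eq_inner)
    also have "\<dots> = w \<bullet> w - 2 * t * (H (H w) \<bullet> w) + t\<^sup>2 * (H (H w) \<bullet> H (H w))"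
      by (simp only: inner_diff_left inner_diff_right inner_scaleR_left inner_scaleR_right
          inner_commute[of w "H (H w)"] power2_eq_square) (simp add: right_diff_distrib)
    finally show ?thesis by (simp add: X_def power2_norm_eq_inner)
  qed
  also have "\<dots> = X - 2 * t * (norm (H w))\<^sup>2 + t\<^sup>2 * (norm (H (H w)))\<^sup>2"
    using sy by (simp add: power2_norm_eq_inner)
  also have "\<dots> \<le> X - 2 * t * (c\<^sup>2 * X) + t\<^sup>2 * (B ^ 4 * X)"
    using P Q tpos by (intro add_mono diff_mono mult_left_mono) auto
  also have "\<dots> = X * (1 - a)" using tc tB by (simp add: algebra_simps)
  also have "\<dots> \<le> X * (1 - a / 2)\<^sup>2"
  proof -
    have "(1 - a / 2)\<^sup>2 = 1 - a + a\<^sup>2 / 4" by (simp add: power2_eq_square field_simps)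
    then have "1 - a \<le> (1 - a / 2)\<^sup>2" by simp
    moreover have "X \<ge> 0" by (simp add: X_def)
    ultimately show ?thesis by (rule mult_left_mono)
  qed
  also have "\<dots> = ((1 - a / 2) * norm w)\<^sup>2" by (simp only: X_def power_mult_distrib mult.commute)
  finally have "(norm (w - t *\<^sub>R H (H w)))\<^sup>2 \<le> ((1 - a / 2) * norm w)\<^sup>2" .
  then have "norm (w - t *\<^sub>R H (H w)) \<le> (1 - a / 2) * norm w"
    by (rule power2_le_imp_le) (use a1 in simp)
  then show ?thesis unfolding t_def a_def .
qed




theorem lemma2p3:
  fixes u :: "'a::euclidean_space \<Rightarrow> real" and \<Omega> :: "'a set"
  assumes "open \<Omega>" and "0 \<in> \<Omega>"
    and "\<forall>x\<in>\<Omega>. twice_differentiable_at u x"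
    and "grad u 0 = 0"
  defines "K \<equiv> {v. hess u 0 v = 0}"
  defines "Proj \<equiv> orth_proj (orthogonal_comp K)"
  shows "\<exists>\<epsilon>>0. \<exists>C. \<forall>p \<in> ball 0 \<epsilon> \<inter> K.
           \<exists>q \<in> cball 0 (C * norm p) \<inter> {p + w | w. w \<in> orthogonal_comp K}.
             q \<in> \<Omega> \<and> Proj (grad u q) = 0"
proof -
  define g where "g = grad u"
  define H where "H = hess u 0"
  have g0: "g 0 = 0" using assms(4) by (simp add: g_def)
  have gH: "(g has_derivative H) (at 0)"
    using assms(2,3) unfolding twice_differentiable_at_def H_def hess_def g_def
    using frechet_derivative_works by blast
  have lin: "linear H" using has_derivative_linear[OF gH] .
  have blin: "bounded_linear H" using lin linear_conv_bounded_linear by blast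
  obtain \<delta>0 where d0: "\<delta>0 > 0" "ball 0 \<delta>0 \<subseteq> \<Omega>"
    using assms(1,2) openE by blast
  have du: "\<forall>y. norm y < \<delta>0 \<longrightarrow> (u has_derivative (\<lambda>v. g y \<bullet> v)) (at y)"
  proof (intro allI impI)
    fix y :: 'a assume "norm y < \<delta>0"
    then have "y \<in> \<Omega>" using d0 by auto
    then have "u differentiable at y"
      using assms(3) unfolding twice_differentiable_at_def
      by (auto dest: eventually_nhds_x_imp_x)
    then show "(u has_derivative (\<lambda>v. g y \<bullet> v)) (at y)" unfolding g_def by (rule grad_deriv)
  qed
  have contg: "isCont g y" if "y \<in> \<Omega>" for y
  proof -
    have "g differentiable at y" using assms(3) that unfolding twice_differentiable_at_def g_def by blast
    then show ?thesis using differentiable_imp_continuous_within by blast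
  qed
  have sym: "H k \<bullet> h = H h \<bullet> k" for h k using hess_sym[OF gH g0 d0(1) du] .
  define V where "V = orthogonal_comp K"
  have subV: "subspace V" unfolding V_def by (rule subspace_orthogonal_comp)
  have clV: "closed V" using subV closed_subspace by blast
  have KH: "K = {v. H v = 0}" by (simp add: K_def H_def)
  have HV: "H x \<in> V" for x
    unfolding V_def orthogonal_comp_def orthogonal_def KH
    by (auto simp: inner_commute[of _ "H x"] sym)
  have KperpV: "y \<in> K \<Longrightarrow> v \<in> V \<Longrightarrow> y \<bullet> v = 0" for y v
    unfolding V_def orthogonal_comp_def orthogonal_def by auto
  have injV: "\<forall>w\<in>V. H w = 0 \<longrightarrow> w = 0"
  proof (intro ballI impI)
    fix w assume "w \<in> V" "H w = 0"
    then have "w \<in> K" by (simp add: KH)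
    then have "w \<bullet> w = 0" using KperpV \<open>w \<in> V\<close> by blast
    then show "w = 0" by simp
  qed
  obtain c0 where c0: "c0 > 0" "\<forall>w\<in>V. norm (H w) \<ge> c0 * norm w"
    using injective_imp_isometric[OF clV subV blin injV] by blast
  obtain B where B: "B > 0" "\<And>x. norm (H x) \<le> B * norm x"
    using linear_bounded_pos[OF lin] by blast
  define c where "c = min c0 B"
  have c: "c > 0" "c \<le> B" using c0 B by (auto simp: c_def)
  have lb: "c * norm w \<le> norm (H w)" if "w \<in> V" for w
    using c0(2) that c_def by (meson min.cobounded1 mult_right_mono norm_ge_zero order_trans)
  define t where "t = c\<^sup>2 / B ^ 4"
  define a where "a = c ^ 4 / B ^ 4"
  have tpos: "t > 0" using B c by (simp add: t_def)
  have a0: "a > 0" using B c by (simp add: a_def)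
  have a1: "a \<le> 1"
  proof -
    have "c ^ 4 \<le> B ^ 4" using c by (intro power_mono) auto
    moreover have "B ^ 4 > 0" using B by simp
    ultimately show ?thesis unfolding a_def by (simp only: divide_le_eq_1_pos)
  qed
  have contr: "norm (w - t *\<^sub>R H (H w)) \<le> (1 - a / 2) * norm w" if "w \<in> V" for w
    unfolding t_def a_def
    by (rule contr_est[OF B(1) c B(2) lb[OF that]]) (rule sym)
  define \<eta> where "\<eta> = a / (8 * t * B)"
  have \<eta>: "\<eta> > 0" using a0 tpos B by (simp add: \<eta>_def)
  obtain d where d: "d > 0" "\<forall>y. norm y < d \<longrightarrow> norm (g y - H y) \<le> \<eta> * norm y"
    using gH \<eta> unfolding has_derivative_at_alt by (fastforce simp: g0)
  define \<epsilon> where "\<epsilon> = min d \<delta>0 / 2"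
  have \<epsilon>: "\<epsilon> > 0" using d d0 by (simp add: \<epsilon>_def)
  show ?thesis
  proof (rule exI[of _ \<epsilon>], rule conjI[OF \<epsilon>], rule exI[of _ "2::real"], rule ballI)
    fix p assume p: "p \<in> ball 0 \<epsilon> \<inter> K"
    have np: "norm p < \<epsilon>" using p by auto
    have Hp: "H p = 0" using p KH by auto
    define S where "S = cball 0 (norm p) \<inter> V"
    define T where "T w = w - t *\<^sub>R H (g (p + w))" for w
    have near: "norm (p + w) < min d \<delta>0" if "w \<in> S" for w
    proof -
      have "norm (p + w) \<le> norm p + norm w" by (rule norm_triangle_ineq)
      also have "\<dots> \<le> 2 * norm p" using that by (simp add: S_def)
      also have "\<dots> < min d \<delta>0" using np by (simp add: \<epsilon>_def)
      finally show ?thesis .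
    qed
    have cont: "continuous_on S T"
    proof (rule continuous_at_imp_continuous_on, rule ballI)
      fix w assume w: "w \<in> S"
      have "p + w \<in> \<Omega>" using near[OF w] d0 by auto
      then have c1: "isCont g (p + w)" by (rule contg)
      have c2: "isCont (\<lambda>w. g (p + w)) w"
      proof -
        have "isCont (\<lambda>v. p + v) w" by (intro continuous_intros)
        from isCont_o2[OF this c1] show ?thesis by simp
      qed
      have c3: "isCont (\<lambda>w. H (g (p + w))) w"
        using isCont_o2[OF c2, of H] linear_continuous_at[OF blin] by blast
      show "isCont T w" unfolding T_def by (intro continuous_intros c3)
    qed
    have maps: "T \<in> S \<rightarrow> S"
    proof
      fix w assume w: "w \<in> S"
      then have wV: "w \<in> V" by (simp add: S_def)
      have TV: "T w \<in> V" unfolding T_def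
        using subV wV HV by (simp add: subspace_diff subspace_scale)
      define r where "r = g (p + w) - H (p + w)"
      have nr: "norm r \<le> \<eta> * (2 * norm p)"
      proof -
        have "norm r \<le> \<eta> * norm (p + w)" using d(2) near[OF w] unfolding r_def by auto
        also have "\<dots> \<le> \<eta> * (2 * norm p)"
          using \<eta> w norm_triangle_ineq[of p w] by (intro mult_left_mono) (auto simp: S_def)
        finally show ?thesis .
      qed
      have gr: "g (p + w) = H w + r" unfolding r_def using Hp by (simp add: linear_add[OF lin])
      have Tw: "T w = (w - t *\<^sub>R H (H w)) - t *\<^sub>R H r"
        unfolding T_def gr by (simp add: linear_add[OF lin] algebra_simps)
      have "norm (T w) \<le> norm (w - t *\<^sub>R H (H w)) + norm (t *\<^sub>R H r)"
        unfolding Tw by (rule norm_triangle_ineq4)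
      also have "\<dots> \<le> (1 - a / 2) * norm p + t * (B * (\<eta> * (2 * norm p)))"
      proof (rule add_mono)
        have nw: "norm w \<le> norm p" using w by (simp add: S_def)
        have "0 \<le> 1 - a / 2" using a1 by simp
        then show "norm (w - t *\<^sub>R H (H w)) \<le> (1 - a / 2) * norm p"
          using order_trans[OF contr[OF wV] mult_left_mono[OF nw]] by blast
        have "norm (H r) \<le> B * (\<eta> * (2 * norm p))"
          using B(2)[of r] nr B(1) by (meson less_imp_le mult_left_mono order_trans)
        then show "norm (t *\<^sub>R H r) \<le> t * (B * (\<eta> * (2 * norm p)))"
          using tpos by (simp add: mult_left_mono)
      qed
      also have "\<dots> = (1 - a / 4) * norm p"
      proof -
        have "t * B * \<eta> = a / 8" using tpos B(1) unfolding \<eta>_def by simp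
        then have "t * (B * (\<eta> * (2 * norm p))) = (a / 4) * norm p"
          by (simp only: ac_simps) simp
        then show ?thesis by (simp add: algebra_simps)
      qed
      also have "\<dots> \<le> norm p" using a0 a1 by (intro mult_left_le_one_le) auto
      finally show "T w \<in> S" using TV by (simp add: S_def)
    qed
    have Scomp: "compact S" unfolding S_def by (intro compact_Int_closed clV compact_cball)
    have Sconv: "convex S" unfolding S_def by (intro convex_Int convex_cball subspace_imp_convex subV)
    have "0 \<in> S" using subV by (simp add: S_def subspace_0)
    then have Sne: "S \<noteq> {}" by blast
    obtain w where w: "w \<in> S" "T w = w" using brouwer[OF Scomp Sconv Sne cont maps] by blast
    define q where "q = p + w"
    have "t *\<^sub>R H (g q) = 0" using w(2) unfolding T_def q_def by simp
    then have "H (g q) = 0" using tpos by simp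
    then have gK: "g q \<in> K" by (simp add: KH)
    have qO: "q \<in> \<Omega>" using near[OF w(1)] d0 unfolding q_def by auto
    have nq: "norm q \<le> 2 * norm p"
      using w(1) norm_triangle_ineq[of p w] unfolding q_def by (auto simp: S_def)
    have wV: "w \<in> V" using w(1) by (simp add: S_def)
    have proj0: "Proj (g q) = 0"
      unfolding Proj_def orth_proj_def V_def[symmetric]
    proof (rule the_equality)
      show "0 \<in> V \<and> g q - 0 \<in> orthogonal_comp V"
      proof -
        have "\<forall>y\<in>V. y \<bullet> g q = 0" using gK KperpV by (metis inner_commute)
        then show ?thesis using subV by (simp add: subspace_0 orthogonal_comp_def orthogonal_def)
      qed
      fix y assume y: "y \<in> V \<and> g q - y \<in> orthogonal_comp V"
      then have "y \<bullet> (g q - y) = 0" by (auto simp: orthogonal_comp_def orthogonal_def)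
      moreover have "y \<bullet> g q = 0" using y gK KperpV by (metis inner_commute)
      ultimately have "y \<bullet> y = 0" by (simp add: inner_diff_right)
      then show "y = 0" by simp
    qed
    show "\<exists>q \<in> cball 0 (2 * norm p) \<inter> {p + w | w. w \<in> orthogonal_comp K}.
             q \<in> \<Omega> \<and> Proj (grad u q) = 0"
      using nq qO proj0 wV unfolding g_def V_def q_def by auto
  qed
qed

end
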